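(* Let $F$, $H$, $X$, $\Omega$, $Q$ and the sequences generated by the IneIREG method be as described in the context, with no inertia, i.e. $\alpha_k=0$ for all $k\ge0$, and suppose $H$ is $\mu$-strongly monotone for some $\mu>0$. Suppose $\eta_k\equiv\eta>0$ and $\lambda_k\in[\underline\lambda,\overline\lambda]$ for all $k\ge0$ with $0<\underline\lambda\le\overline\lambda<1/L$, $L:=L_F+\eta L_H$. Let $\beta_k:=\big(\frac{1}{1-\lambda_k^2L^2}+\frac{1}{2\lambda_k\eta\mu}\big)^{-1}$, $p_k:=\big(\prod_{i=0}^k(1-\beta_i)\big)^{-1}$ for $k\ge0$, for $k\ge1$ $\Lambda_k:=\sum_{j=0}^{k-1}\lambda_j\eta p_j$ and $\overline y_k:=\Lambda_k^{-1}\sum_{j=0}^{k-1}\lambda_j\eta p_jy_j$, and $\beta:=\big(\frac{1}{1-\overline\lambda^2L^2}+\frac{1}{2\underline\lambda\eta\mu}\big)^{-1}\in(0,1)$. Then for all $k\ge1$, $$-B_H\,\mathrm{dist}(\overline y_k,Q)\le\mathrm{Gap}(\overline y_k,H,Q)\le(1-\beta)^k\Big(\frac{D_X^2}{2\underline\lambda\eta}\Big).$$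
   Context: Work in $\mathbb{R}^n$ with Euclidean inner product $\langle\cdot,\cdot\rangle$ and norm $\|\cdot\|$. The maps $F\colon \mathrm{Dom}\,F\to\mathbb{R}^n$ and $H\colon\mathrm{Dom}\,H\to\mathbb{R}^n$ are monotone and Lipschitz continuous with constants $L_F>0$ and $L_H>0$; $H$ is $\mu$-strongly monotone means $\langle H(x)-H(y),x-y\rangle\ge\mu\|x-y\|^2$ for all $x,y\in\mathrm{Dom}\,H$. $X$ is a nonempty compact convex set and $\Omega$ a nonempty closed convex set with $X\subset\Omega\subset\mathrm{Dom}\,F\cap\mathrm{Dom}\,H$; $P_X,P_\Omega$ denote orthogonal projections. $Q:=\{x\in X:\langle F(x),y-x\rangle\ge0\ \forall y\in X\}$ is assumed nonempty. $D_X:=\sup_{x,y\in X}\|x-y\|$, $B_H:=\sup_{x\in Q}\|H(x)\|$, $\mathrm{dist}(y,Q)$ is the Euclidean distance to $Q$. $\mathrm{Gap}(z,H,Q):=\sup_{x\in Q}\langle H(x),z-x\rangle$. IneIREG method: start with $x_0=x_{-1}\in X$; for $k=0,1,\dots$, with parameters $\alpha_k\ge0$, $\lambda_k>0$, $\eta_k>0$, set $w_k=x_k+\alpha_k(x_k-x_{k-1})$, $w'_k=P_\Omega(w_k)$, $y_k=P_X\big(w_k-\lambda_k(F(w'_k)+\eta_kH(w'_k))\big)$, $x_{k+1}=P_X\big(w_k-\lambda_k(F(y_k)+\eta_kH(y_k))\big)$. *)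

theory Defs
  imports "HOL-Analysis.Analysis"
begin

definition monotone_op :: "('a::real_inner \<Rightarrow> 'a) \<Rightarrow> 'a set \<Rightarrow> bool" where
  "monotone_op T D \<longleftrightarrow> (\<forall>x\<in>D. \<forall>y\<in>D. inner (T x - T y) (x - y) \<ge> 0)"

definition strongly_monotone_op :: "real \<Rightarrow> ('a::real_inner \<Rightarrow> 'a) \<Rightarrow> 'a set \<Rightarrow> bool" where
  "strongly_monotone_op \<mu> T D \<longleftrightarrow>
     (\<forall>x\<in>D. \<forall>y\<in>D. inner (T x - T y) (x - y) \<ge> \<mu> * (norm (x - y))\<^sup>2)"

definition VI_sol :: "('a::real_inner \<Rightarrow> 'a) \<Rightarrow> 'a set \<Rightarrow> 'a set" where
  "VI_sol F X = {x \<in> X. \<forall>y\<in>X. inner (F x) (y - x) \<ge> 0}"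

definition gap_fn :: "'a::real_inner \<Rightarrow> ('a \<Rightarrow> 'a) \<Rightarrow> 'a set \<Rightarrow> real" where
  "gap_fn z H Q = (SUP x\<in>Q. inner (H x) (z - x))"

end

theory Submission
  imports Defs
begin

lemma eg_step:
  fixes x y xp z Gx Gy :: "'a::real_inner"
  assumes p1: "inner (x - l *\<^sub>R Gx - y) (xp - y) \<le> 0"
    and p2: "inner (x - l *\<^sub>R Gy - xp) (z - xp) \<le> 0"
    and lip: "norm (Gx - Gy) \<le> L * norm (x - y)"
    and l: "l \<ge> 0" and L: "L \<ge> 0"
  shows "(norm (xp - z))\<^sup>2 \<le> (norm (x - z))\<^sup>2 - (1 - l\<^sup>2 * L\<^sup>2) * (norm (x - y))\<^sup>2 + 2 * l * inner Gy (z - y)"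
proof -
  define u where "u = x - y"
  define v where "v = xp - y"
  define w where "w = z - y"
  have e1: "x - z = u - w" "xp - z = v - w" "x - xp = u - v" "z - xp = w - v" "x - y = u" "xp - y = v" "z - y = w"
    "x - l *\<^sub>R Gx - y = u - l *\<^sub>R Gx" "x - l *\<^sub>R Gy - xp = (u - v) - l *\<^sub>R Gy"
    by (simp_all add: u_def v_def w_def algebra_simps)
  have q1: "inner u v - l * inner Gx v \<le> 0" using p1 unfolding e1 by (simp add: inner_diff_left)
  have q2: "inner u w - inner u v - inner v w + inner v v - l * inner Gy w + l * inner Gy v \<le> 0"
    using p2 unfolding e1 by (simp add: inner_diff_left inner_diff_right inner_commute algebra_simps)
  have c: "inner (Gx - Gy) v \<le> norm (Gx - Gy) * norm v" by (rule norm_cauchy_schwarz)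
  have c2: "norm (Gx - Gy) * norm v \<le> L * norm u * norm v"
    using lip by (simp add: e1 mult_right_mono)
  have c3: "2 * l * (L * norm u * norm v) \<le> l\<^sup>2 * L\<^sup>2 * (norm u)\<^sup>2 + (norm v)\<^sup>2"
    using sum_squares_ge_zero[of "l*L*norm u - norm v" 0]
    by (simp add: power2_eq_square algebra_simps) 
  have c4: "l * inner (Gx - Gy) v \<le> l * (L * norm u * norm v)"
    using c c2 l by (meson mult_left_mono order_trans)
  have "(norm (v - w))\<^sup>2 \<le> (norm (u - w))\<^sup>2 - (1 - l\<^sup>2 * L\<^sup>2) * (norm u)\<^sup>2 + 2 * l * inner Gy w"
    using q1 q2 c3 c4
    by (simp add: power2_norm_eq_inner inner_diff_left inner_diff_right inner_commute algebra_simps)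
  then show ?thesis by (simp add: e1)
qed

lemma beta_ineq:
  fixes a b n s t :: real
  assumes a: "a > 0" and b: "b > 0" and s: "s \<ge> 0" and t: "t \<ge> 0" and n: "n \<ge> 0" and nst: "n \<le> s + t"
  shows "(1 / (1/a + 1/b)) * n\<^sup>2 \<le> a * s\<^sup>2 + b * t\<^sup>2"
proof -
  have e: "1/(1/a+1/b) = a*b/(a+b)" using a b by (simp add: field_simps)
  have "n\<^sup>2 \<le> (s+t)\<^sup>2" using n nst by (simp add: power_mono)
  hence "a*b/(a+b) * n\<^sup>2 \<le> a*b/(a+b)*(s+t)\<^sup>2" using a b by (intro mult_left_mono) auto
  also have "\<dots> \<le> a * s\<^sup>2 + b * t\<^sup>2"
  proof -
    have "(a+b)*(a * s\<^sup>2 + b * t\<^sup>2) - a*b*(s+t)\<^sup>2 = (a * s - b * t)\<^sup>2" by (simp add: power2_eq_square algebra_simps)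
    moreover have "0 \<le> (a * s - b * t)\<^sup>2" by simp
    moreover have "(a * s\<^sup>2 + b * t\<^sup>2)*(a+b) = (a+b)*(a * s\<^sup>2 + b * t\<^sup>2)" by (simp add: mult.commute)
    ultimately have "a*b*(s+t)\<^sup>2 \<le> (a * s\<^sup>2 + b * t\<^sup>2)*(a+b)" by linarith
    hence "a*b*(s+t)\<^sup>2/(a+b) \<le> a * s\<^sup>2 + b * t\<^sup>2" using a b by (simp add: pos_divide_le_eq)
    thus ?thesis by simp
  qed
  finally show ?thesis using e by simp
qed

lemma inv_lt1:
  fixes u v :: real
  assumes "1 \<le> u" "0 < v"
  shows "1 / (u + v) < 1"
proof -
  have "1 < u + v" using assms by simp
  thus ?thesis by simp
qed

theorem corollary4p11:
  fixes F H :: "'a::euclidean_space \<Rightarrow> 'a"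
    and DF DH X \<Omega> :: "'a set"
    and LF LH \<mu> \<eta> lamlo lamhi :: real
    and \<alpha> lam :: "nat \<Rightarrow> real"
    and x y :: "nat \<Rightarrow> 'a"
  assumes LF_pos: "LF > 0" and LH_pos: "LH > 0"
    and F_mono: "monotone_op F DF" and H_mono: "monotone_op H DH"
    and F_lip: "LF-lipschitz_on DF F" and H_lip: "LH-lipschitz_on DH H"
    and mu_pos: "\<mu> > 0" and H_strong: "strongly_monotone_op \<mu> H DH"
    and X_ne: "X \<noteq> {}" and X_compact: "compact X" and X_convex: "convex X"
    and Om_ne: "\<Omega> \<noteq> {}" and Om_closed: "closed \<Omega>" and Om_convex: "convex \<Omega>"
    and X_sub: "X \<subseteq> \<Omega>" and Om_sub: "\<Omega> \<subseteq> DF \<inter> DH"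
    and Q_ne: "VI_sol F X \<noteq> {}"
    and alpha0: "\<forall>k. \<alpha> k = 0"
    and eta_pos: "\<eta> > 0"
    and lam_lo: "0 < lamlo" and lam_order: "lamlo \<le> lamhi"
    and lam_hi: "lamhi < 1 / (LF + \<eta> * LH)"
    and lam_range: "\<forall>k. lamlo \<le> lam k \<and> lam k \<le> lamhi"
    and x0: "x 0 \<in> X"
    and y_def: "\<forall>k. y k = closest_point X
        ((x k + \<alpha> k *\<^sub>R (x k - x (k - 1)))
          - lam k *\<^sub>R (F (closest_point \<Omega> (x k + \<alpha> k *\<^sub>R (x k - x (k - 1))))
             + \<eta> *\<^sub>R H (closest_point \<Omega> (x k + \<alpha> k *\<^sub>R (x k - x (k - 1))))))"
    and x_def: "\<forall>k. x (Suc k) = closest_point X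
        ((x k + \<alpha> k *\<^sub>R (x k - x (k - 1)))
          - lam k *\<^sub>R (F (y k) + \<eta> *\<^sub>R H (y k)))"
  shows "let L = LF + \<eta> * LH;
             Q = VI_sol F X;
             betak = (\<lambda>k. 1 / (1 / (1 - (lam k)\<^sup>2 * L\<^sup>2) + 1 / (2 * lam k * \<eta> * \<mu>)));
             p = (\<lambda>k. 1 / (\<Prod>i\<in>{0..k}. (1 - betak i)));
             \<Lambda> = (\<lambda>k. \<Sum>j<k. lam j * \<eta> * p j);
             ybar = (\<lambda>k. (1 / \<Lambda> k) *\<^sub>R (\<Sum>j<k. (lam j * \<eta> * p j) *\<^sub>R y j));
             \<beta> = 1 / (1 / (1 - lamhi\<^sup>2 * L\<^sup>2) + 1 / (2 * lamlo * \<eta> * \<mu>));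
             BH = (SUP q\<in>Q. norm (H q));
             DX = diameter X
         in 0 < \<beta> \<and> \<beta> < 1 \<and>
            (\<forall>k\<ge>1. - BH * infdist (ybar k) Q \<le> gap_fn (ybar k) H Q
                   \<and> gap_fn (ybar k) H Q \<le> (1 - \<beta>) ^ k * (DX\<^sup>2 / (2 * lamlo * \<eta>)))"
proof -
  define L where "L = LF + \<eta> * LH"
  define Q where "Q = VI_sol F X"
  define betak where "betak = (\<lambda>k. 1 / (1 / (1 - (lam k)\<^sup>2 * L\<^sup>2) + 1 / (2 * lam k * \<eta> * \<mu>)))"
  define p where "p = (\<lambda>k. 1 / (\<Prod>i\<in>{0..k}. (1 - betak i)))"
  define \<Lambda> where "\<Lambda> = (\<lambda>k. \<Sum>j<k. lam j * \<eta> * p j)"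
  define ybar where "ybar = (\<lambda>k. (1 / \<Lambda> k) *\<^sub>R (\<Sum>j<k. (lam j * \<eta> * p j) *\<^sub>R y j))"
  define \<beta> where "\<beta> = 1 / (1 / (1 - lamhi\<^sup>2 * L\<^sup>2) + 1 / (2 * lamlo * \<eta> * \<mu>))"
  define BH where "BH = (SUP q\<in>Q. norm (H q))"
  define DX where "DX = diameter X"
  define G where "G = (\<lambda>z. F z + \<eta> *\<^sub>R H z)"
  have Lpos: "L > 0" using LF_pos LH_pos eta_pos by (simp add: L_def add_pos_pos)
  have Xclosed: "closed X" using X_compact compact_imp_closed by blast
  have Xbdd: "bounded X" using X_compact compact_imp_bounded by blast
  have xX: "x k \<in> X" for k
  proof (induction k)
    case 0 then show ?case using x0 by simp
  next
    case (Suc k) then show ?case using x_def closest_point_in_set[OF Xclosed X_ne] by metis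
  qed
  have yk: "y k = closest_point X (x k - lam k *\<^sub>R G (x k))" for k
    using y_def alpha0 closest_point_self[of "x k" \<Omega>] xX[of k] X_sub by (auto simp: G_def)
  have xk: "x (Suc k) = closest_point X (x k - lam k *\<^sub>R G (y k))" for k
    using x_def alpha0 by (simp add: G_def)
  have yX: "y k \<in> X" for k using yk closest_point_in_set[OF Xclosed X_ne] by metis
  have Glip: "norm (G a - G b) \<le> L * norm (a - b)" if "a \<in> \<Omega>" "b \<in> \<Omega>" for a b
  proof -
    have "dist (F a) (F b) \<le> LF * dist a b" using lipschitz_onD[OF F_lip] that Om_sub by blast
    moreover have "dist (H a) (H b) \<le> LH * dist a b" using lipschitz_onD[OF H_lip] that Om_sub by blast
    have "G a - G b = (F a - F b) + \<eta> *\<^sub>R (H a - H b)" by (simp add: G_def algebra_simps)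
    hence "norm (G a - G b) \<le> norm (F a - F b) + \<eta> * norm (H a - H b)"
      using norm_triangle_ineq[of "F a - F b" "\<eta> *\<^sub>R (H a - H b)"] eta_pos by simp
    moreover have "\<eta> * norm (H a - H b) \<le> \<eta> * (LH * norm (a - b))"
      using \<open>dist (H a) (H b) \<le> LH * dist a b\<close> eta_pos by (simp add: dist_norm mult_left_mono)
    ultimately show ?thesis using \<open>dist (F a) (F b) \<le> LF * dist a b\<close>
      by (simp add: dist_norm L_def algebra_simps)
  qed
  have lamk: "0 < lam k" "lam k * L < 1" for k
  proof -
    show "0 < lam k" using lam_range lam_lo by (meson less_le_trans)
    have "lam k * L \<le> lamhi * L" using lam_range Lpos by (simp add: mult_right_mono)
    also have "\<dots> < 1" using lam_hi Lpos by (simp add: L_def pos_less_divide_eq)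
    finally show "lam k * L < 1" .
  qed
  have ak: "0 < 1 - (lam k)\<^sup>2 * L\<^sup>2" "1 - (lam k)\<^sup>2 * L\<^sup>2 \<le> 1" for k
  proof -
    have "(lam k * L)\<^sup>2 < 1" using lamk[of k] Lpos
      by (metis abs_of_pos mult_pos_pos abs_square_less_1)
    thus "0 < 1 - (lam k)\<^sup>2 * L\<^sup>2" by (simp add: power_mult_distrib)
    show "1 - (lam k)\<^sup>2 * L\<^sup>2 \<le> 1" by simp
  qed
  have bk: "0 < 2 * lam k * \<eta> * \<mu>" for k using lamk eta_pos mu_pos by simp
  have ahi: "0 < 1 - lamhi\<^sup>2 * L\<^sup>2"
  proof -
    have "lamhi * L < 1" using lam_hi Lpos by (simp add: L_def pos_less_divide_eq)
    hence "(lamhi * L)\<^sup>2 < 1" using Lpos lam_lo lam_order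
      by (metis abs_of_pos mult_pos_pos abs_square_less_1 less_le_trans)
    thus ?thesis by (simp add: power_mult_distrib)
  qed
  have blo: "0 < 2 * lamlo * \<eta> * \<mu>" using lam_lo eta_pos mu_pos by simp
  have betak_pos: "0 < betak k" for k
  proof -
    have "0 < 1 / (1 - (lam k)\<^sup>2 * L\<^sup>2) + 1 / (2 * lam k * \<eta> * \<mu>)"
      using ak(1)[of k] bk[of k] by (intro add_pos_pos) simp_all
    thus ?thesis by (simp add: betak_def)
  qed
  have betak_lt1: "betak k < 1" for k
  proof -
    have "1 \<le> 1 / (1 - (lam k)\<^sup>2 * L\<^sup>2)" using ak[of k] by simp
    moreover have "0 < 1 / (2 * lam k * \<eta> * \<mu>)" using bk[of k] by simp
    ultimately show ?thesis unfolding betak_def by (rule inv_lt1)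
  qed
  have beta_pos: "0 < \<beta>"
  proof -
    have "0 < 1 / (1 - lamhi\<^sup>2 * L\<^sup>2) + 1 / (2 * lamlo * \<eta> * \<mu>)"
      using ahi blo by (intro add_pos_pos) simp_all
    thus ?thesis by (simp add: \<beta>_def)
  qed
  have beta_lt1: "\<beta> < 1"
  proof -
    have "1 \<le> 1 / (1 - lamhi\<^sup>2 * L\<^sup>2)" using ahi by simp
    moreover have "0 < 1 / (2 * lamlo * \<eta> * \<mu>)" using blo by simp
    ultimately show ?thesis unfolding \<beta>_def by (rule inv_lt1)
  qed
  have beta_le: "\<beta> \<le> betak k" for k
  proof -
    have "(lam k)\<^sup>2 \<le> lamhi\<^sup>2" using lam_range lamk(1)[of k] by (simp add: power_mono)
    hence "1 - lamhi\<^sup>2 * L\<^sup>2 \<le> 1 - (lam k)\<^sup>2 * L\<^sup>2" using Lpos by (simp add: mult_right_mono)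
    hence 1: "1 / (1 - (lam k)\<^sup>2 * L\<^sup>2) \<le> 1 / (1 - lamhi\<^sup>2 * L\<^sup>2)" using ahi
      by (simp add: frac_le)
    have "2 * lamlo * \<eta> * \<mu> \<le> 2 * lam k * \<eta> * \<mu>" using lam_range eta_pos mu_pos by simp
    hence 2: "1 / (2 * lam k * \<eta> * \<mu>) \<le> 1 / (2 * lamlo * \<eta> * \<mu>)" using blo
      by (simp add: frac_le)
    have 3: "0 < 1 / (1 - (lam k)\<^sup>2 * L\<^sup>2) + 1 / (2 * lam k * \<eta> * \<mu>)" using ak(1)[of k] bk[of k] by (intro add_pos_pos) simp_all
    show ?thesis unfolding \<beta>_def betak_def using 1 2 3 by (simp add: frac_le)
  qed
  have step: "(norm (x (Suc k) - q))\<^sup>2 \<le> (1 - betak k) * (norm (x k - q))\<^sup>2 - 2 * lam k * \<eta> * inner (H q) (y k - q)"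
    if qQ: "q \<in> Q" for q k
  proof -
    have qX: "q \<in> X" using qQ by (simp add: Q_def VI_sol_def)
    have p1: "inner (x k - lam k *\<^sub>R G (x k) - y k) (x (Suc k) - y k) \<le> 0"
      using closest_point_dot[OF X_convex Xclosed xX[of "Suc k"], of "x k - lam k *\<^sub>R G (x k)"] yk[of k] by simp
    have p2: "inner (x k - lam k *\<^sub>R G (y k) - x (Suc k)) (q - x (Suc k)) \<le> 0"
      using closest_point_dot[OF X_convex Xclosed qX, of "x k - lam k *\<^sub>R G (y k)"] xk[of k] by simp
    have eg: "(norm (x (Suc k) - q))\<^sup>2 \<le> (norm (x k - q))\<^sup>2 - (1 - (lam k)\<^sup>2 * L\<^sup>2) * (norm (x k - y k))\<^sup>2 + 2 * lam k * inner (G (y k)) (q - y k)"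
      using eg_step[OF p1 p2 Glip] xX yX X_sub lamk(1)[of k] Lpos by auto
    have Fm: "inner (F (y k) - F q) (y k - q) \<ge> 0" using F_mono yX qX X_sub Om_sub unfolding monotone_op_def by blast
    have Fq: "inner (F q) (y k - q) \<ge> 0" using qQ yX by (simp add: Q_def VI_sol_def)
    have Hm: "inner (H (y k) - H q) (y k - q) \<ge> \<mu> * (norm (y k - q))\<^sup>2" using H_strong yX qX X_sub Om_sub unfolding strongly_monotone_op_def by blast
    have F1: "inner (F (y k)) (q - y k) \<le> 0"
    proof -
      have "inner (F (y k)) (q - y k) = - inner (F (y k)) (y k - q)" by (simp add: inner_diff_right)
      thus ?thesis using Fm Fq by (simp add: inner_diff_left)
    qed
    have H1: "inner (H (y k)) (q - y k) \<le> - inner (H q) (y k - q) - \<mu> * (norm (y k - q))\<^sup>2"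
    proof -
      have "inner (H (y k)) (q - y k) = - inner (H (y k)) (y k - q)" by (simp add: inner_diff_right)
      thus ?thesis using Hm by (simp add: inner_diff_left)
    qed
    have G1: "inner (G (y k)) (q - y k) = inner (F (y k)) (q - y k) + \<eta> * inner (H (y k)) (q - y k)"
      by (simp add: G_def inner_add_left)
    have G2: "2 * lam k * inner (G (y k)) (q - y k) \<le> - 2 * lam k * \<eta> * inner (H q) (y k - q) - (2 * lam k * \<eta> * \<mu>) * (norm (y k - q))\<^sup>2"
    proof -
      have "\<eta> * inner (H (y k)) (q - y k) \<le> \<eta> * (- inner (H q) (y k - q) - \<mu> * (norm (y k - q))\<^sup>2)"
        using H1 eta_pos by (simp add: mult_left_mono)
      hence "inner (G (y k)) (q - y k) \<le> - \<eta> * inner (H q) (y k - q) - \<eta> * \<mu> * (norm (y k - q))\<^sup>2"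
        using G1 F1 by (simp add: algebra_simps)
      hence "2 * lam k * inner (G (y k)) (q - y k) \<le> 2 * lam k * (- \<eta> * inner (H q) (y k - q) - \<eta> * \<mu> * (norm (y k - q))\<^sup>2)"
        using lamk(1)[of k] by (simp add: mult_left_mono)
      thus ?thesis by (simp add: algebra_simps)
    qed
    have bi: "betak k * (norm (x k - q))\<^sup>2 \<le> (1 - (lam k)\<^sup>2 * L\<^sup>2) * (norm (x k - y k))\<^sup>2 + (2 * lam k * \<eta> * \<mu>) * (norm (y k - q))\<^sup>2"
      unfolding betak_def
      by (rule beta_ineq[OF ak(1) bk]) (auto intro: norm_triangle_sub[THEN order_trans] simp: norm_triangle_ineq[of "x k - y k" "y k - q", simplified])
    show ?thesis using eg G2 bi by (simp add: algebra_simps)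
  qed
  define r where "r = (\<lambda>k. 1 / (\<Prod>i<k. (1 - betak i)))"
  have prodpos: "0 < (\<Prod>i<k. (1 - betak i))" for k using betak_lt1 by (simp add: prod_pos)
  have r_pos: "0 < r k" for k using prodpos by (simp add: r_def)
  have p_r: "p k = r (Suc k)" for k by (simp add: p_def r_def atLeast0AtMost lessThan_Suc_atMost)
  have p_pos: "0 < p k" for k using p_r r_pos by simp
  have p_r2: "p k * (1 - betak k) = r k" for k
    using prodpos[of k] betak_lt1[of k] by (simp add: p_r r_def)
  have tele: "(\<Sum>j<k. 2 * (lam j * \<eta> * p j) * inner (H q) (y j - q)) \<le> (norm (x 0 - q))\<^sup>2 - r k * (norm (x k - q))\<^sup>2"
    if qQ: "q \<in> Q" for q k
  proof (induction k)
    case 0 then show ?case by (simp add: r_def)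
  next
    case (Suc k)
    have "p k * (norm (x (Suc k) - q))\<^sup>2 \<le> p k * ((1 - betak k) * (norm (x k - q))\<^sup>2 - 2 * lam k * \<eta> * inner (H q) (y k - q))"
      using step[OF qQ, of k] p_pos[of k] by (simp add: mult_left_mono)
    moreover have "p k * ((1 - betak k) * (norm (x k - q))\<^sup>2 - 2 * lam k * \<eta> * inner (H q) (y k - q))
       = (p k * (1 - betak k)) * (norm (x k - q))\<^sup>2 - 2 * (lam k * \<eta> * p k) * inner (H q) (y k - q)"
      by (simp add: algebra_simps)
    ultimately have "2 * (lam k * \<eta> * p k) * inner (H q) (y k - q) \<le> r k * (norm (x k - q))\<^sup>2 - r (Suc k) * (norm (x (Suc k) - q))\<^sup>2"
      unfolding p_r2[of k] unfolding p_r[of k] by linarith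
    then show ?case using Suc by simp
  qed
  have r_ge: "1 / (1 - \<beta>) ^ k \<le> r k" for k
  proof -
    have "(\<Prod>i<k. (1 - betak i)) \<le> (\<Prod>i<k. (1 - \<beta>))"
      by (rule prod_mono) (use beta_le betak_lt1 in \<open>auto simp: less_imp_le\<close>)
    hence "(\<Prod>i<k. (1 - betak i)) \<le> (1 - \<beta>) ^ k" by simp
    thus ?thesis unfolding r_def using prodpos[of k] by (simp add: frac_le)
  qed
  have upper: "inner (H q) (ybar k - q) \<le> (1 - \<beta>) ^ k * (DX\<^sup>2 / (2 * lamlo * \<eta>))"
    if k1: "k \<ge> 1" and qQ: "q \<in> Q" for k q
  proof -
    have qX: "q \<in> X" using qQ by (simp add: Q_def VI_sol_def)
    obtain m where km: "k = Suc m" using k1 by (cases k) auto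
    have wpos: "0 < lam j * \<eta> * p j" for j using lamk(1) eta_pos p_pos by simp
    have Lam_ge: "lamlo * \<eta> * r k \<le> \<Lambda> k"
    proof -
      have "lamlo * \<eta> * r k \<le> lam m * \<eta> * p m" using lam_range eta_pos r_pos[of k] p_r[of m] km
        by (simp add: mult_right_mono)
      also have "\<dots> \<le> \<Lambda> k" unfolding \<Lambda>_def km
        by (rule member_le_sum) (use wpos in \<open>auto simp: less_imp_le\<close>)
      finally show ?thesis .
    qed
    have Lam_pos: "0 < \<Lambda> k" using Lam_ge lam_lo eta_pos r_pos[of k]
      by (smt (verit) mult_pos_pos)
    have "\<Lambda> k *\<^sub>R (ybar k - q) = (\<Sum>j<k. (lam j * \<eta> * p j) *\<^sub>R (y j - q))"
      using Lam_pos by (simp add: ybar_def \<Lambda>_def scaleR_diff_right sum_subtractf scaleR_sum_left)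
    hence "\<Lambda> k * inner (H q) (ybar k - q) = (\<Sum>j<k. (lam j * \<eta> * p j) * inner (H q) (y j - q))"
      by (metis (no_types, lifting) inner_scaleR_right inner_sum_right sum.cong)
    hence "2 * \<Lambda> k * inner (H q) (ybar k - q) \<le> (norm (x 0 - q))\<^sup>2 - r k * (norm (x k - q))\<^sup>2"
      using tele[OF qQ, of k] by (simp add: sum_distrib_left mult.assoc)
    also have "\<dots> \<le> (norm (x 0 - q))\<^sup>2" using r_pos[of k] by simp
    also have "\<dots> \<le> DX\<^sup>2"
      using diameter_bounded_bound[OF Xbdd x0 qX] by (simp add: DX_def dist_norm power_mono)
    finally have A: "inner (H q) (ybar k - q) \<le> DX\<^sup>2 / (2 * \<Lambda> k)" using Lam_pos
      by (simp add: pos_le_divide_eq mult.commute mult.left_commute)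
    have "DX\<^sup>2 / (2 * \<Lambda> k) \<le> DX\<^sup>2 / (2 * (lamlo * \<eta> * (1 / (1 - \<beta>) ^ k)))"
    proof -
      have LL: "lamlo * \<eta> * (1 / (1 - \<beta>) ^ k) \<le> \<Lambda> k"
        using Lam_ge r_ge[of k] lam_lo eta_pos by (meson order_trans mult_left_mono mult_pos_pos less_imp_le)
      have pp: "0 < lamlo * \<eta> * (1 / (1 - \<beta>) ^ k)" using lam_lo eta_pos beta_lt1 by simp
      show ?thesis
      proof (rule divide_left_mono)
        show "2 * (lamlo * \<eta> * (1 / (1 - \<beta>) ^ k)) \<le> 2 * \<Lambda> k" using LL by simp
        show "0 \<le> DX\<^sup>2" by simp
        show "0 < 2 * \<Lambda> k * (2 * (lamlo * \<eta> * (1 / (1 - \<beta>) ^ k)))"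
          using Lam_pos pp by (metis mult_pos_pos zero_less_numeral)
      qed
    qed
    also have "\<dots> = (1 - \<beta>) ^ k * (DX\<^sup>2 / (2 * lamlo * \<eta>))" using beta_lt1 by (simp add: mult.commute mult.assoc)
    finally show ?thesis using A by simp
  qed
  have Qne: "Q \<noteq> {}" using Q_ne by (simp add: Q_def)
  have Hbdd: "norm (H q) \<le> norm (H (x 0)) + LH * DX" if "q \<in> Q" for q
  proof -
    have qX: "q \<in> X" using that by (simp add: Q_def VI_sol_def)
    have "dist (H q) (H (x 0)) \<le> LH * dist q (x 0)" using lipschitz_onD[OF H_lip] qX x0 X_sub Om_sub by blast
    also have "\<dots> \<le> LH * DX" using diameter_bounded_bound[OF Xbdd qX x0] LH_pos by (simp add: DX_def)
    finally show ?thesis by (smt (verit) dist_norm norm_triangle_ineq2 norm_minus_commute)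
  qed
  have bddH: "bdd_above ((\<lambda>q. norm (H q)) ` Q)" by (rule bdd_aboveI2[OF Hbdd])
  have BHq: "norm (H q) \<le> BH" if "q \<in> Q" for q unfolding BH_def using bddH that by (rule cSUP_upper2) simp
  have BH0: "0 \<le> BH" using Qne BHq by (meson ex_in_conv norm_ge_zero order_trans)
  have main: "\<forall>k\<ge>1. - BH * infdist (ybar k) Q \<le> gap_fn (ybar k) H Q
                   \<and> gap_fn (ybar k) H Q \<le> (1 - \<beta>) ^ k * (DX\<^sup>2 / (2 * lamlo * \<eta>))"
  proof (intro allI impI conjI)
    fix k :: nat assume k1: "k \<ge> 1"
    show "gap_fn (ybar k) H Q \<le> (1 - \<beta>) ^ k * (DX\<^sup>2 / (2 * lamlo * \<eta>))"
      unfolding gap_fn_def using Qne upper[OF k1] by (intro cSUP_least) auto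
    have bddG: "bdd_above ((\<lambda>q. inner (H q) (ybar k - q)) ` Q)" by (rule bdd_aboveI2[OF upper[OF k1]])
    have lowq: "- BH * dist (ybar k) q \<le> gap_fn (ybar k) H Q" if qQ: "q \<in> Q" for q
    proof -
      have "- BH * dist (ybar k) q \<le> - norm (H q) * norm (ybar k - q)"
        using BHq[OF qQ] by (simp add: dist_norm mult_right_mono)
      also have "\<dots> \<le> inner (H q) (ybar k - q)"
        using norm_cauchy_schwarz[of "- H q" "ybar k - q"] by simp
      also have "\<dots> \<le> gap_fn (ybar k) H Q" unfolding gap_fn_def using bddG qQ by (rule cSUP_upper2) simp
      finally show ?thesis .
    qed
    show "- BH * infdist (ybar k) Q \<le> gap_fn (ybar k) H Q"
    proof (cases "BH = 0")
      case True
      then show ?thesis using lowq Qne by auto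
    next
      case False
      hence BHp: "BH > 0" using BH0 by simp
      have "- gap_fn (ybar k) H Q / BH \<le> infdist (ybar k) Q"
        unfolding infdist_notempty[OF Qne]
      proof (rule cINF_greatest[OF Qne])
        fix q assume qQ: "q \<in> Q"
        have "- dist (ybar k) q * BH \<le> gap_fn (ybar k) H Q" using lowq[OF qQ] by (simp add: mult.commute)
        hence "- dist (ybar k) q \<le> gap_fn (ybar k) H Q / BH" using BHp by (simp add: pos_le_divide_eq)
        thus "- gap_fn (ybar k) H Q / BH \<le> dist (ybar k) q" by simp
      qed
      hence "- infdist (ybar k) Q \<le> gap_fn (ybar k) H Q / BH" by simp
      hence "- infdist (ybar k) Q * BH \<le> gap_fn (ybar k) H Q" using BHp by (simp add: pos_le_divide_eq)
      thus ?thesis by (simp add: mult.commute)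
    qed
  qed
  have final: "0 < \<beta> \<and> \<beta> < 1 \<and> (\<forall>k\<ge>1. - BH * infdist (ybar k) Q \<le> gap_fn (ybar k) H Q
                   \<and> gap_fn (ybar k) H Q \<le> (1 - \<beta>) ^ k * (DX\<^sup>2 / (2 * lamlo * \<eta>)))"
    using beta_pos beta_lt1 main by blast
  show ?thesis using final unfolding Let_def L_def Q_def betak_def p_def \<Lambda>_def ybar_def \<beta>_def BH_def DX_def .
qed

end
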